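(* Let $f:T\to T'$ be a homomorphism of pre-trusses. If $P$ is a completely prime paragon in the pre-truss $\operatorname{im}f$, then $f^{-1}(P)$ is a completely prime paragon in $T$.
   Context: A heap is a set with a ternary operation $[-,-,-]$ satisfying $[a_1,a_2,[a_3,a_4,a_5]]=[[a_1,a_2,a_3],a_4,a_5]$ and $[a,a,b]=b=[b,a,a]$. A pre-truss is a heap with an associative multiplication; homomorphisms preserve both operations, and images are pre-trusses. A normal sub-heap is a non-empty subset $S$ closed under $[-,-,-]$ with $[[a,e,s],a,e]\in S$ for all $a$ and $e,s\in S$; $a\sim_S b$ iff $[a,b,s]\in S$ for some (equivalently all) $s\in S$. A sub-heap $S$ is closed if $[ts',ts,s]\in S$ and $[s't,st,s]\in S$ for all $s,s'\in S$, $t$. A paragon is a non-empty normal sub-heap $P$ all of whose $\sim_P$-classes are closed. An ideal is a normal sub-heap $I$ with $ti,it\in I$ for all $t$, $i\in I$. For $p\in P$, $a$ in the pre-truss, $P_p^a=\{[q,p,a]\mid q\in P\}$. A non-empty paragon $P$ of a pre-truss $X$ is completely prime if for all $p\in P$ and $a,b,c\in X$: $[ab,ac,p]\in P$ implies that $P_p^a$ is an ideal or $[b,c,p]\in P$; and $[ba,ca,p]\in P$ implies that $P_p^a$ is an ideal or $[b,c,p]\in P$. *)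

theory Defs
  imports Main
begin

text \<open>A structure is given by a carrier
set A, a ternary heap operation h and a binary multiplication m (total
functions on the ambient type, only their behaviour on A matters).\<close>

definition heap :: "'a set \<Rightarrow> ('a \<Rightarrow> 'a \<Rightarrow> 'a \<Rightarrow> 'a) \<Rightarrow> bool" where
  "heap A h \<longleftrightarrow>
     (\<forall>a\<in>A. \<forall>b\<in>A. \<forall>c\<in>A. h a b c \<in> A) \<and>
     (\<forall>a1\<in>A. \<forall>a2\<in>A. \<forall>a3\<in>A. \<forall>a4\<in>A. \<forall>a5\<in>A.
        h a1 a2 (h a3 a4 a5) = h (h a1 a2 a3) a4 a5) \<and>
     (\<forall>a\<in>A. \<forall>b\<in>A. h a a b = b \<and> h b a a = b)"

definition pretruss :: "'a set \<Rightarrow> ('a \<Rightarrow> 'a \<Rightarrow> 'a \<Rightarrow> 'a) \<Rightarrow> ('a \<Rightarrow> 'a \<Rightarrow> 'a) \<Rightarrow> bool" where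
  "pretruss A h m \<longleftrightarrow> heap A h \<and>
     (\<forall>a\<in>A. \<forall>b\<in>A. m a b \<in> A) \<and>
     (\<forall>a\<in>A. \<forall>b\<in>A. \<forall>c\<in>A. m (m a b) c = m a (m b c))"

definition pretruss_hom ::
  "'a set \<Rightarrow> ('a \<Rightarrow> 'a \<Rightarrow> 'a \<Rightarrow> 'a) \<Rightarrow> ('a \<Rightarrow> 'a \<Rightarrow> 'a) \<Rightarrow>
   'b set \<Rightarrow> ('b \<Rightarrow> 'b \<Rightarrow> 'b \<Rightarrow> 'b) \<Rightarrow> ('b \<Rightarrow> 'b \<Rightarrow> 'b) \<Rightarrow> ('a \<Rightarrow> 'b) \<Rightarrow> bool" where
  "pretruss_hom A h m B h' m' f \<longleftrightarrow>
     (\<forall>a\<in>A. f a \<in> B) \<and>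
     (\<forall>a\<in>A. \<forall>b\<in>A. \<forall>c\<in>A. f (h a b c) = h' (f a) (f b) (f c)) \<and>
     (\<forall>a\<in>A. \<forall>b\<in>A. f (m a b) = m' (f a) (f b))"

definition subheap :: "'a set \<Rightarrow> ('a \<Rightarrow> 'a \<Rightarrow> 'a \<Rightarrow> 'a) \<Rightarrow> 'a set \<Rightarrow> bool" where
  "subheap A h S \<longleftrightarrow> S \<subseteq> A \<and> (\<forall>a\<in>S. \<forall>b\<in>S. \<forall>c\<in>S. h a b c \<in> S)"

definition normal_subheap :: "'a set \<Rightarrow> ('a \<Rightarrow> 'a \<Rightarrow> 'a \<Rightarrow> 'a) \<Rightarrow> 'a set \<Rightarrow> bool" where
  "normal_subheap A h S \<longleftrightarrow> subheap A h S \<and> S \<noteq> {} \<and>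
     (\<forall>a\<in>A. \<forall>e\<in>S. \<forall>s\<in>S. h (h a e s) a e \<in> S)"

definition heap_rel :: "'a set \<Rightarrow> ('a \<Rightarrow> 'a \<Rightarrow> 'a \<Rightarrow> 'a) \<Rightarrow> 'a set \<Rightarrow> 'a \<Rightarrow> 'a \<Rightarrow> bool" where
  "heap_rel A h S a b \<longleftrightarrow> a \<in> A \<and> b \<in> A \<and> (\<exists>s\<in>S. h a b s \<in> S)"

definition heap_class :: "'a set \<Rightarrow> ('a \<Rightarrow> 'a \<Rightarrow> 'a \<Rightarrow> 'a) \<Rightarrow> 'a set \<Rightarrow> 'a \<Rightarrow> 'a set" where
  "heap_class A h S a = {b. heap_rel A h S a b}"

definition closed_subheap ::
  "'a set \<Rightarrow> ('a \<Rightarrow> 'a \<Rightarrow> 'a \<Rightarrow> 'a) \<Rightarrow> ('a \<Rightarrow> 'a \<Rightarrow> 'a) \<Rightarrow> 'a set \<Rightarrow> bool" where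
  "closed_subheap A h m S \<longleftrightarrow> subheap A h S \<and>
     (\<forall>s\<in>S. \<forall>s'\<in>S. \<forall>t\<in>A. h (m t s') (m t s) s \<in> S \<and> h (m s' t) (m s t) s \<in> S)"

definition paragon ::
  "'a set \<Rightarrow> ('a \<Rightarrow> 'a \<Rightarrow> 'a \<Rightarrow> 'a) \<Rightarrow> ('a \<Rightarrow> 'a \<Rightarrow> 'a) \<Rightarrow> 'a set \<Rightarrow> bool" where
  "paragon A h m P \<longleftrightarrow> normal_subheap A h P \<and>
     (\<forall>a\<in>A. closed_subheap A h m (heap_class A h P a))"

definition ideal ::
  "'a set \<Rightarrow> ('a \<Rightarrow> 'a \<Rightarrow> 'a \<Rightarrow> 'a) \<Rightarrow> ('a \<Rightarrow> 'a \<Rightarrow> 'a) \<Rightarrow> 'a set \<Rightarrow> bool" where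
  "ideal A h m I \<longleftrightarrow> normal_subheap A h I \<and>
     (\<forall>t\<in>A. \<forall>i\<in>I. m t i \<in> I \<and> m i t \<in> I)"

text \<open>\<open>P_p^a = {[q,p,a] | q \<in> P}\<close>.\<close>
definition shifted :: "('a \<Rightarrow> 'a \<Rightarrow> 'a \<Rightarrow> 'a) \<Rightarrow> 'a set \<Rightarrow> 'a \<Rightarrow> 'a \<Rightarrow> 'a set" where
  "shifted h P p a = {h q p a | q. q \<in> P}"

definition completely_prime ::
  "'a set \<Rightarrow> ('a \<Rightarrow> 'a \<Rightarrow> 'a \<Rightarrow> 'a) \<Rightarrow> ('a \<Rightarrow> 'a \<Rightarrow> 'a) \<Rightarrow> 'a set \<Rightarrow> bool" where
  "completely_prime A h m P \<longleftrightarrow> P \<noteq> {} \<and> paragon A h m P \<and>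
     (\<forall>p\<in>P. \<forall>a\<in>A. \<forall>b\<in>A. \<forall>c\<in>A.
        (h (m a b) (m a c) p \<in> P \<longrightarrow> ideal A h m (shifted h P p a) \<or> h b c p \<in> P) \<and>
        (h (m b a) (m c a) p \<in> P \<longrightarrow> ideal A h m (shifted h P p a) \<or> h b c p \<in> P))"

end

theory Submission
  imports Defs
begin

lemma heap_cl: "heap A h \<Longrightarrow> a \<in> A \<Longrightarrow> b \<in> A \<Longrightarrow> c \<in> A \<Longrightarrow> h a b c \<in> A"
  unfolding heap_def by blast

lemma heap_assoc: "heap A h \<Longrightarrow> a1 \<in> A \<Longrightarrow> a2 \<in> A \<Longrightarrow> a3 \<in> A \<Longrightarrow> a4 \<in> A \<Longrightarrow> a5 \<in> A \<Longrightarrow>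
  h (h a1 a2 a3) a4 a5 = h a1 a2 (h a3 a4 a5)"
  unfolding heap_def by metis

lemma heap_l: "heap A h \<Longrightarrow> a \<in> A \<Longrightarrow> b \<in> A \<Longrightarrow> h a a b = b"
  unfolding heap_def by blast

lemma heap_r: "heap A h \<Longrightarrow> a \<in> A \<Longrightarrow> b \<in> A \<Longrightarrow> h b a a = b"
  unfolding heap_def by blast

lemma pt_heap: "pretruss A h m \<Longrightarrow> heap A h"
  unfolding pretruss_def by blast

lemma pt_m: "pretruss A h m \<Longrightarrow> a \<in> A \<Longrightarrow> b \<in> A \<Longrightarrow> m a b \<in> A"
  unfolding pretruss_def by blast

lemma hom_in: "pretruss_hom T h m T' h' m' f \<Longrightarrow> a \<in> T \<Longrightarrow> f a \<in> T'"
  unfolding pretruss_hom_def by blast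

lemma hom_h: "pretruss_hom T h m T' h' m' f \<Longrightarrow> a \<in> T \<Longrightarrow> b \<in> T \<Longrightarrow> c \<in> T \<Longrightarrow> f (h a b c) = h' (f a) (f b) (f c)"
  unfolding pretruss_hom_def by blast

lemma hom_m: "pretruss_hom T h m T' h' m' f \<Longrightarrow> a \<in> T \<Longrightarrow> b \<in> T \<Longrightarrow> f (m a b) = m' (f a) (f b)"
  unfolding pretruss_hom_def by blast

lemma pre_normal:
  assumes hom: "pretruss_hom T h m T' h' m' f"
    and ns: "normal_subheap (f ` T) h' S" and ne: "{x \<in> T. f x \<in> S} \<noteq> {}"
    and ht: "heap T h"
  shows "normal_subheap T h {x \<in> T. f x \<in> S}"
  using assms heap_cl[OF ht] hom_h[OF hom] unfolding normal_subheap_def subheap_def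
  by (auto simp del: ex_in_conv)

lemma pre_ideal:
  assumes hom: "pretruss_hom T h m T' h' m' f"
    and ns: "ideal (f ` T) h' m' S" and ne: "{x \<in> T. f x \<in> S} \<noteq> {}"
    and ht: "pretruss T h m"
  shows "ideal T h m {x \<in> T. f x \<in> S}"
proof -
  have "normal_subheap T h {x \<in> T. f x \<in> S}"
    using pre_normal[OF hom _ ne] ns ht unfolding ideal_def pretruss_def by blast
  then show ?thesis using assms pt_m[OF ht] hom_m[OF hom] unfolding ideal_def by auto
qed

lemma pre_closed:
  assumes hom: "pretruss_hom T h m T' h' m' f"
    and ns: "closed_subheap (f ` T) h' m' S"
    and ht: "pretruss T h m"
  shows "closed_subheap T h m {x \<in> T. f x \<in> S}"
  using assms heap_cl[OF pt_heap[OF ht]] pt_m[OF ht] hom_h[OF hom] hom_m[OF hom]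
  unfolding closed_subheap_def subheap_def
  by auto

lemma pre_class:
  assumes hom: "pretruss_hom T h m T' h' m' f"
    and PT: "P \<subseteq> f ` T" and a: "a \<in> T"
    and ht: "pretruss T h m"
  shows "heap_class T h {x \<in> T. f x \<in> P} a = {x \<in> T. f x \<in> heap_class (f ` T) h' P (f a)}"
proof (intro set_eqI iffI)
  fix b assume "b \<in> heap_class T h {x \<in> T. f x \<in> P} a"
  then show "b \<in> {x \<in> T. f x \<in> heap_class (f ` T) h' P (f a)}"
    using assms heap_cl[OF pt_heap[OF ht]] hom_h[OF hom] unfolding heap_class_def heap_rel_def
    by auto
next
  fix b assume b: "b \<in> {x \<in> T. f x \<in> heap_class (f ` T) h' P (f a)}"
  then obtain s' where s': "s' \<in> P" "h' (f a) (f b) s' \<in> P"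
    unfolding heap_class_def heap_rel_def by auto
  then obtain s where s: "s \<in> T" "s' = f s" using PT by auto
  have "h a b s \<in> T" using heap_cl[OF pt_heap[OF ht]] a b s by auto
  moreover have "f (h a b s) \<in> P" using hom_h[OF hom] a b s s' by auto
  ultimately show "b \<in> heap_class T h {x \<in> T. f x \<in> P} a"
    using a b s s' unfolding heap_class_def heap_rel_def by auto
qed

lemma pre_shifted:
  assumes hom: "pretruss_hom T h m T' h' m' f"
    and PT: "P \<subseteq> f ` T" and a: "a \<in> T" and p: "p \<in> T"
    and ht: "pretruss T h m" and ht': "pretruss T' h' m'"
  shows "shifted h {x \<in> T. f x \<in> P} p a = {x \<in> T. f x \<in> shifted h' P (f p) (f a)}"
proof (intro set_eqI iffI)
  fix x assume "x \<in> shifted h {x \<in> T. f x \<in> P} p a"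
  then show "x \<in> {x \<in> T. f x \<in> shifted h' P (f p) (f a)}"
    using assms heap_cl[OF pt_heap[OF ht]] hom_h[OF hom] unfolding shifted_def
    by auto
next
  fix x assume x: "x \<in> {x \<in> T. f x \<in> shifted h' P (f p) (f a)}"
  then obtain q' where q': "q' \<in> P" "f x = h' q' (f p) (f a)"
    unfolding shifted_def by auto
  then obtain q where q: "q \<in> T" "q' = f q" using PT by auto
  have HT: "heap T h" and HT': "heap T' h'" using ht ht' unfolding pretruss_def by auto
  have fT: "\<And>y. y \<in> T \<Longrightarrow> f y \<in> T'" using hom unfolding pretruss_hom_def by auto
  have qq: "h x a p \<in> T" using HT x a p unfolding heap_def by auto
  have "f (h x a p) = h' (f x) (f a) (f p)" using hom x a p unfolding pretruss_hom_def by auto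
  also have "\<dots> = h' (h' q' (f p) (f a)) (f a) (f p)" using q' by simp
  also have "\<dots> = h' q' (f p) (h' (f a) (f a) (f p))" using HT' fT[OF q(1)] fT[OF a] fT[OF p] q(2)
    by (simp add: heap_assoc)
  also have "\<dots> = q'" using HT' fT[OF q(1)] fT[OF a] fT[OF p] q(2)
    by (simp add: heap_l heap_r)
  finally have fq: "f (h x a p) \<in> P" using q' by simp
  have "h (h x a p) p a = h x a (h p p a)" using HT x a p by (simp add: heap_assoc)
  also have "\<dots> = x" using HT x a p by (simp add: heap_l heap_r)
  finally have "h (h x a p) p a = x" .
  then show "x \<in> shifted h {x \<in> T. f x \<in> P} p a"
    unfolding shifted_def using qq fq by (smt (verit) mem_Collect_eq)
qed

theorem lemma4p13:
  fixes T :: "'a set" and h :: "'a \<Rightarrow> 'a \<Rightarrow> 'a \<Rightarrow> 'a" and m :: "'a \<Rightarrow> 'a \<Rightarrow> 'a"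
    and T' :: "'b set" and h' :: "'b \<Rightarrow> 'b \<Rightarrow> 'b \<Rightarrow> 'b" and m' :: "'b \<Rightarrow> 'b \<Rightarrow> 'b"
    and f :: "'a \<Rightarrow> 'b" and P :: "'b set"
  assumes "pretruss T h m" and "pretruss T' h' m'"
    and "pretruss_hom T h m T' h' m' f"
    and "completely_prime (f ` T) h' m' P"
  shows "completely_prime T h m {x \<in> T. f x \<in> P}"
proof -
  note ht = assms(1) and ht' = assms(2) and hom = assms(3)
  have cp: "completely_prime (f ` T) h' m' P" by fact
  have par: "paragon (f ` T) h' m' P" and Pne: "P \<noteq> {}"
    using cp unfolding completely_prime_def by auto
  have PT: "P \<subseteq> f ` T" using par unfolding paragon_def normal_subheap_def subheap_def by auto
  have Qne: "{x \<in> T. f x \<in> P} \<noteq> {}" using Pne PT by blast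
  have HT: "heap T h" using ht unfolding pretruss_def by auto
  have par2: "paragon T h m {x \<in> T. f x \<in> P}"
    unfolding paragon_def
  proof (intro conjI ballI)
    show "normal_subheap T h {x \<in> T. f x \<in> P}"
      using pre_normal[OF hom _ Qne HT] par unfolding paragon_def by auto
  next
    fix a assume a: "a \<in> T"
    have "closed_subheap (f ` T) h' m' (heap_class (f ` T) h' P (f a))"
      using par a unfolding paragon_def by auto
    then show "closed_subheap T h m (heap_class T h {x \<in> T. f x \<in> P} a)"
      using pre_closed[OF hom _ ht] pre_class[OF hom PT a ht] by simp
  qed
  have sh: "\<And>p a. p \<in> {x \<in> T. f x \<in> P} \<Longrightarrow> a \<in> T \<Longrightarrow>
     ideal (f ` T) h' m' (shifted h' P (f p) (f a)) \<Longrightarrow> ideal T h m (shifted h {x \<in> T. f x \<in> P} p a)"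
  proof -
    fix p a assume p: "p \<in> {x \<in> T. f x \<in> P}" and a: "a \<in> T"
      and i: "ideal (f ` T) h' m' (shifted h' P (f p) (f a))"
    have "h p p a \<in> shifted h {x \<in> T. f x \<in> P} p a" using p unfolding shifted_def by auto
    then have ne: "{x \<in> T. f x \<in> shifted h' P (f p) (f a)} \<noteq> {}"
      using pre_shifted[OF hom PT a _ ht ht'] p by auto
    show "ideal T h m (shifted h {x \<in> T. f x \<in> P} p a)"
      using pre_ideal[OF hom i ne ht] pre_shifted[OF hom PT a _ ht ht'] p by auto
  qed
  have fh: "\<And>x y z. x \<in> T \<Longrightarrow> y \<in> T \<Longrightarrow> z \<in> T \<Longrightarrow> f (h x y z) = h' (f x) (f y) (f z)"
    and fm: "\<And>x y. x \<in> T \<Longrightarrow> y \<in> T \<Longrightarrow> f (m x y) = m' (f x) (f y)"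
    using hom unfolding pretruss_hom_def by auto
  have hT: "\<And>x y z. x \<in> T \<Longrightarrow> y \<in> T \<Longrightarrow> z \<in> T \<Longrightarrow> h x y z \<in> T"
    and mT: "\<And>x y. x \<in> T \<Longrightarrow> y \<in> T \<Longrightarrow> m x y \<in> T"
    using ht unfolding pretruss_def heap_def by auto
  show ?thesis
    unfolding completely_prime_def
  proof (intro conjI Qne par2 ballI impI)
    fix p a b c assume p: "p \<in> {x \<in> T. f x \<in> P}" and a: "a \<in> T" and b: "b \<in> T" and c: "c \<in> T"
    {
      assume "h (m a b) (m a c) p \<in> {x \<in> T. f x \<in> P}"
      then have "h' (m' (f a) (f b)) (m' (f a) (f c)) (f p) \<in> P"
        using fh fm mT a b c p by auto
      then have "ideal (f ` T) h' m' (shifted h' P (f p) (f a)) \<or> h' (f b) (f c) (f p) \<in> P"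
        using cp p a b c unfolding completely_prime_def by auto
      then show "ideal T h m (shifted h {x \<in> T. f x \<in> P} p a) \<or> h b c p \<in> {x \<in> T. f x \<in> P}"
        using sh[OF p a] fh hT b c p by auto
    }
    {
      assume "h (m b a) (m c a) p \<in> {x \<in> T. f x \<in> P}"
      then have "h' (m' (f b) (f a)) (m' (f c) (f a)) (f p) \<in> P"
        using fh fm mT a b c p by auto
      then have "ideal (f ` T) h' m' (shifted h' P (f p) (f a)) \<or> h' (f b) (f c) (f p) \<in> P"
        using cp p a b c unfolding completely_prime_def by auto
      then show "ideal T h m (shifted h {x \<in> T. f x \<in> P} p a) \<or> h b c p \<in> {x \<in> T. f x \<in> P}"
        using sh[OF p a] fh hT b c p by auto
    }
  qed
qed

end
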